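(* Let $\alpha_0>\alpha_1>0$ and let $x_1^\circ>x_2^\circ$ be integers. Let $\mathrm{FS}_{x_1^\circ,x_2^\circ}$ denote the two-car system (continuous-time TASEP with two particles) in which the front car starts at $x_1^\circ$ and has speed $\alpha_0$, and the back car starts at $x_2^\circ$ and has speed $\alpha_1$. Let $G$ be a random variable independent of everything else with $\mathbb{P}(G=k)=(1-\alpha_1/\alpha_0)(\alpha_1/\alpha_0)^k$, $k\in\mathbb{Z}_{\ge0}$, and set $$y_1^\circ:=x_2^\circ+1+\min\bigl(G,\;x_1^\circ-x_2^\circ-1\bigr).$$ Let $\mathrm{SF}_{y_1^\circ,x_2^\circ}$ denote the two-car system in which the front car starts at the (random) position $y_1^\circ$ and has speed $\alpha_1$, and the back car starts at $x_2^\circ$ and has speed $\alpha_0$. Then the trajectory $\{x_2(t)\}_{t\in\mathbb{R}_{\ge0}}$ of the car in the back has the same distribution (as a process) in $\mathrm{FS}_{x_1^\circ,x_2^\circ}$ and in $\mathrm{SF}_{y_1^\circ,x_2^\circ}$.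
   Context: Two-car system: two particles at integer positions $x_1(t)>x_2(t)$ evolving in continuous time $t\ge0$. Each car carries an independent exponential clock whose rate is the car's speed. When a car's clock rings, the car jumps by $1$ to the right, provided the destination is not occupied by the other car; otherwise the jump is suppressed. In particular the front car performs a Poisson simple random walk with rate equal to its speed. *)

theory Defs
  imports "HOL-Probability.Probability"
begin

text \<open>A state is a pair (x1, x2) of integer positions, x1 the front car,
x2 the back car. The front car has speed a, the back car speed b. The process is the
continuous-time Markov chain with jump rates: (x1,x2) to (x1+1,x2) at rate a; (x1,x2) to
(x1,x2+1) at rate b provided x2+1 differs from x1 (otherwise the jump is suppressed).
Its transition function is given by uniformization at the total rate a+b: the number of
clock rings up to time t is Poisson with mean (a+b)t, and each ring belongs to the front
car with probability a/(a+b), to the back car otherwise.\<close>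

definition twocar_step :: "real \<Rightarrow> real \<Rightarrow> int \<times> int \<Rightarrow> (int \<times> int) pmf" where
  "twocar_step a b s =
     map_pmf (\<lambda>front. if front then (fst s + 1, snd s)
                       else if snd s + 1 = fst s then s else (fst s, snd s + 1))
             (bernoulli_pmf (a / (a + b)))"

definition twocar_steps :: "real \<Rightarrow> real \<Rightarrow> nat \<Rightarrow> int \<times> int \<Rightarrow> (int \<times> int) pmf" where
  "twocar_steps a b n s = ((\<lambda>p. bind_pmf p (twocar_step a b)) ^^ n) (return_pmf s)"

definition twocar_trans :: "real \<Rightarrow> real \<Rightarrow> real \<Rightarrow> int \<times> int \<Rightarrow> (int \<times> int) pmf" where
  "twocar_trans a b t s =
     (if t \<le> 0 then return_pmf s
      else bind_pmf (poisson_pmf ((a + b) * t)) (\<lambda>n. twocar_steps a b n s))"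

text \<open>Finite-dimensional distributions: starting in state s at time t0, the joint law of the
states at the successive times of the list ts (ts sorted, all at least t0).\<close>
fun twocar_path :: "real \<Rightarrow> real \<Rightarrow> int \<times> int \<Rightarrow> real \<Rightarrow> real list \<Rightarrow> (int \<times> int) list pmf" where
  "twocar_path a b s t0 [] = return_pmf []"
| "twocar_path a b s t0 (t # ts) =
     bind_pmf (twocar_trans a b (t - t0) s)
       (\<lambda>s'. map_pmf (\<lambda>rest. s' # rest) (twocar_path a b s' t ts))"

definition twocar_fdd :: "real \<Rightarrow> real \<Rightarrow> (int \<times> int) pmf \<Rightarrow> real list \<Rightarrow> (int \<times> int) list pmf" where
  "twocar_fdd a b init ts = bind_pmf init (\<lambda>s. twocar_path a b s 0 ts)"

definition back_car_fdd :: "real \<Rightarrow> real \<Rightarrow> (int \<times> int) pmf \<Rightarrow> real list \<Rightarrow> int list pmf" where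
  "back_car_fdd a b init ts = map_pmf (map snd) (twocar_fdd a b init ts)"

end

theory Submission imports Defs begin

lemma geo_tail:
  assumes "0 < p" "p \<le> 1"
  shows "measure_pmf.prob (geometric_pmf p) {n. m \<le> n} = (1 - p) ^ m"
proof (induction m)
  case 0 then show ?case by simp
next
  case (Suc m)
  have "{n. Suc m \<le> n} = {n. m \<le> n} - {m}" by auto
  then have "measure_pmf.prob (geometric_pmf p) {n. Suc m \<le> n} =
      measure_pmf.prob (geometric_pmf p) {n. m \<le> n} - measure_pmf.prob (geometric_pmf p) {m}"
    by (simp add: measure_pmf.finite_measure_Diff)
  also have "\<dots> = (1-p)^m - (1-p)^m * p" using Suc assms by (simp add: measure_pmf_single)
  finally show ?case by (simp add: algebra_simps)
qed

definition lam :: "real \<Rightarrow> int \<times> int \<Rightarrow> (int \<times> int) pmf" where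
  "lam p s = map_pmf (\<lambda>G. (snd s + 1 + min (int G) (fst s - snd s - 1), snd s)) (geometric_pmf p)"

lemma pmf_lam:
  assumes "0 < p" "p \<le> 1" "x1 > x2"
  shows "pmf (lam p (x1, x2)) (u, v) =
    (if v = x2 \<and> x2 < u \<and> u < x1 then (1-p)^nat(u - x2 - 1) * p
     else if v = x2 \<and> u = x1 then (1-p)^nat(x1 - x2 - 1) else 0)"
proof -
  let ?h = "\<lambda>G::nat. (x2 + 1 + min (int G) (x1 - x2 - 1), x2)"
  have "pmf (lam p (x1, x2)) (u, v) = measure_pmf.prob (geometric_pmf p) (?h -` {(u,v)})"
    by (simp add: lam_def pmf_map)
  also have "\<dots> = (if v = x2 \<and> x2 < u \<and> u < x1 then (1-p)^nat(u - x2 - 1) * p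
     else if v = x2 \<and> u = x1 then (1-p)^nat(x1 - x2 - 1) else 0)"
  proof (cases "v = x2 \<and> x2 < u \<and> u < x1")
    case True
    then have "?h -` {(u,v)} = {nat (u - x2 - 1)}" by auto
    then show ?thesis using True assms by (simp add: measure_pmf_single)
  next
    case F: False
    show ?thesis
    proof (cases "v = x2 \<and> u = x1")
      case True
      then have "?h -` {(u,v)} = {n. nat (x1 - x2 - 1) \<le> n}" using assms by auto
      then show ?thesis using True F assms geo_tail by simp
    next
      case False
      then have "?h -` {(u,v)} = {}" using F assms by auto
      then show ?thesis using F False by (simp only: if_not_P[OF F] if_not_P[OF False] measure_empty if_False)
    qed
  qed
  finally show ?thesis .
qed


definition Pd :: "real \<Rightarrow> int \<Rightarrow> int \<Rightarrow> real" where
  "Pd r d j = (if 0 < j \<and> j < d then r ^ nat (j - 1) * (1 - r) else if j = d then r ^ nat (d - 1) else 0)"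

lemma Pd_nonpos: "j \<le> 0 \<Longrightarrow> d \<ge> 1 \<Longrightarrow> Pd r d j = 0"
  by (simp add: Pd_def)

lemma Pd_Suc: "Pd r (int (Suc e)) (int (Suc k)) =
   (if k < e then r ^ k * (1 - r) else if k = e then r ^ e else 0)"
  by (simp add: Pd_def)

lemma alg0:
  fixes q r :: real and d j :: int
  assumes qr: "1 - q = q * r" and d: "d \<ge> 1"
  shows "(1 - q) * Pd r d (j - 1) + q * (if j = 1 then Pd r d 1 else 0) =
         q * Pd r (d + 1) j + (1 - q) * (if d = 1 then Pd r 1 j else 0)"
proof (cases "j \<le> 0")
  case True then show ?thesis using d by (simp add: Pd_nonpos)
next
  case False
  then obtain k where k: "j = int (Suc k)" by (metis gr0_implies_Suc not_le pos_int_cases)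
  obtain e where e: "d = int (Suc e)" using d by (metis int_one_le_iff_zero_less gr0_implies_Suc pos_int_cases)
  show ?thesis
  proof (cases k)
    case 0
    then show ?thesis using k e qr
      apply (auto simp add: Pd_def algebra_simps)
      done
  next
    case (Suc k')
    have a: "j - 1 = int (Suc k')" using k Suc by simp
    have b: "d + 1 = int (Suc (Suc e))" using e by simp
    have n: "\<And>n. nat (1 + int n) = Suc n" by simp
    have m: "\<And>x. q * (r * x) = x - q * x" using qr by (metis mult.assoc left_diff_distrib mult_1)
    show ?thesis unfolding a b k e Pd_Suc using qr Suc
      by (auto simp: Pd_def algebra_simps n m)
  qed
qed

lemma alg1:
  fixes q r :: real and d j :: int
  assumes qr: "1 - q = q * r" and d: "d \<ge> 1"
  shows "q * (if j \<noteq> 1 then Pd r d j else 0) = (1 - q) * (if d \<noteq> 1 then Pd r (d - 1) (j - 1) else 0)"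
proof (cases "j \<le> 1")
  case True then show ?thesis using d by (auto simp: Pd_nonpos)
next
  case False
  define k where "k = nat (j - 2)"
  have k: "j = int (Suc (Suc k))" using False unfolding k_def by simp
  obtain e where e: "d = int (Suc e)" using d by (metis int_one_le_iff_zero_less gr0_implies_Suc pos_int_cases)
  have m: "\<And>x. q * (r * x) = x - q * x" using qr by (metis mult.assoc left_diff_distrib mult_1)
  show ?thesis
  proof (cases e)
    case 0
    then show ?thesis using k e by (simp add: Pd_def)
  next
    case (Suc e')
    have a: "j - 1 = int (Suc k)" using k by simp
    have b: "d - 1 = int (Suc e')" using e Suc by simp
    show ?thesis unfolding a b k e Suc Pd_Suc using qr
      apply (auto simp: Pd_def) done
  qed
qed


definition Fm :: "int \<times> int \<Rightarrow> int \<times> int" where "Fm s = (fst s + 1, snd s)"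
definition Bk :: "int \<times> int \<Rightarrow> int \<times> int" where
  "Bk s = (if snd s + 1 = fst s then s else (fst s, snd s + 1))"

lemma step_alt: "twocar_step a b s = map_pmf (\<lambda>f. if f then Fm s else Bk s) (bernoulli_pmf (a / (a + b)))"
  unfolding twocar_step_def Fm_def Bk_def by simp

lemma pmf_bind_step:
  assumes "0 \<le> a / (a + b)" "a / (a + b) \<le> 1"
  shows "pmf (bind_pmf M (twocar_step a b)) y =
    a / (a + b) * pmf (map_pmf Fm M) y + (1 - a / (a + b)) * pmf (map_pmf Bk M) y"
proof -
  have "bind_pmf M (twocar_step a b) = bind_pmf (bernoulli_pmf (a / (a + b)))
          (\<lambda>f. map_pmf (\<lambda>s. if f then Fm s else Bk s) M)"
    unfolding step_alt map_pmf_def bind_assoc_pmf bind_return_pmf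
    by (subst bind_commute_pmf) simp
  then show ?thesis using assms by (simp add: pmf_bind cong: if_cong)
qed

lemma pmf_step_bind:
  assumes "0 \<le> a / (a + b)" "a / (a + b) \<le> 1"
  shows "pmf (bind_pmf (twocar_step a b s) f) y =
    a / (a + b) * pmf (f (Fm s)) y + (1 - a / (a + b)) * pmf (f (Bk s)) y"
  using assms unfolding step_alt by (simp add: bind_map_pmf pmf_bind)

lemma pmf_map_Fm: "pmf (map_pmf Fm M) (u, v) = pmf M (u - 1, v)"
proof -
  have "inj Fm" unfolding Fm_def inj_def by auto
  moreover have "(u, v) = Fm (u - 1, v)" by (simp add: Fm_def)
  ultimately show ?thesis by (metis pmf_map_inj')
qed

lemma pmf_map_Bk: "pmf (map_pmf Bk M) (u, v) =
   (if v + 1 = u then pmf M (u, v) else 0) + (if v \<noteq> u then pmf M (u, v - 1) else 0)"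
proof -
  have "pmf (map_pmf Bk M) (u, v) = measure_pmf.prob M (Bk -` {(u, v)})" by (simp add: pmf_map)
  also have "\<dots> = (if v + 1 = u then pmf M (u, v) else 0) + (if v \<noteq> u then pmf M (u, v - 1) else 0)"
  proof (cases "v + 1 = u")
    case True
    then have "Bk -` {(u, v)} = {(u, v), (u, v - 1)}" by (auto simp: Bk_def split: if_splits)
    then show ?thesis using True by (simp add: measure_pmf_single measure_measure_pmf_finite)
  next
    case F: False
    show ?thesis
    proof (cases "v = u")
      case True
      then have "Bk -` {(u, v)} = {}" using F by (auto simp: Bk_def split: if_splits)
      then show ?thesis using True F by simp
    next
      case False
      then have "Bk -` {(u, v)} = {(u, v - 1)}" using F by (auto simp: Bk_def split: if_splits)
      then show ?thesis using False F by (simp add: measure_pmf_single)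
    qed
  qed
  finally show ?thesis .
qed


lemma pmf_lam_Pd:
  assumes "0 < p" "p \<le> 1" "x1 > x2"
  shows "pmf (lam p (x1, x2)) (u, v) = (if v = x2 then Pd (1 - p) (x1 - x2) (u - x2) else 0)"
  using assms by (simp add: pmf_lam Pd_def)

lemma key_step:
  fixes a b :: real
  assumes ab: "a > b" "b > 0" and x: "x1 > x2"
  shows "bind_pmf (lam (1 - b / a) (x1, x2)) (twocar_step b a) =
         bind_pmf (twocar_step a b (x1, x2)) (lam (1 - b / a))"
proof (rule pmf_eqI)
  fix i :: "int \<times> int"
  obtain u v where i: "i = (u, v)" by force
  define q where "q = a / (a + b)"
  define r where "r = b / a"
  have p: "0 < 1 - b / a" "1 - b / a \<le> 1" using ab by (auto simp: field_simps)
  have rr: "1 - (1 - b / a) = r" by (simp add: r_def)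
  have q01: "0 \<le> q" "q \<le> 1" using ab by (auto simp: q_def field_simps)
  have q'01: "0 \<le> b / (b + a)" "b / (b + a) \<le> 1" using ab by (auto simp: field_simps)
  have qb: "b / (b + a) = 1 - q" using ab by (simp add: q_def field_simps)
  have qr: "1 - q = q * r" using ab by (simp add: q_def r_def field_simps)
  have d: "x1 - x2 \<ge> 1" using x by simp
  have L: "pmf (bind_pmf (lam (1 - b / a) (x1, x2)) (twocar_step b a)) (u, v) =
     (1 - q) * (if v = x2 then Pd r (x1 - x2) (u - 1 - x2) else 0)
     + q * ((if v + 1 = u then (if v = x2 then Pd r (x1 - x2) (u - x2) else 0) else 0)
           + (if v \<noteq> u then (if v - 1 = x2 then Pd r (x1 - x2) (u - x2) else 0) else 0))"
    using q'01 p x by (simp add: pmf_bind_step pmf_map_Fm pmf_map_Bk pmf_lam_Pd qb rr)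
  have R: "pmf (bind_pmf (twocar_step a b (x1, x2)) (lam (1 - b / a))) (u, v) =
     q * (if v = x2 then Pd r (x1 + 1 - x2) (u - x2) else 0)
     + (1 - q) * (if x2 + 1 = x1 then (if v = x2 then Pd r (x1 - x2) (u - x2) else 0)
                  else (if v = x2 + 1 then Pd r (x1 - (x2 + 1)) (u - (x2 + 1)) else 0))"
    using q01 p x by (simp add: pmf_step_bind Fm_def Bk_def pmf_lam_Pd rr q_def[symmetric])
  have E: "(1 - q) * (if v = x2 then Pd r (x1 - x2) (u - 1 - x2) else 0)
     + q * ((if v + 1 = u then (if v = x2 then Pd r (x1 - x2) (u - x2) else 0) else 0)
           + (if v \<noteq> u then (if v - 1 = x2 then Pd r (x1 - x2) (u - x2) else 0) else 0))
    = q * (if v = x2 then Pd r (x1 + 1 - x2) (u - x2) else 0)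
     + (1 - q) * (if x2 + 1 = x1 then (if v = x2 then Pd r (x1 - x2) (u - x2) else 0)
                  else (if v = x2 + 1 then Pd r (x1 - (x2 + 1)) (u - (x2 + 1)) else 0))"
  proof (cases "v = x2")
    case True
    have "(1 - q) * Pd r (x1 - x2) ((u - x2) - 1) + q * (if u - x2 = 1 then Pd r (x1 - x2) 1 else 0) =
         q * Pd r ((x1 - x2) + 1) (u - x2) + (1 - q) * (if x1 - x2 = 1 then Pd r 1 (u - x2) else 0)"
      by (rule alg0[OF qr d])
    then show ?thesis using True by (auto simp: algebra_simps)
  next
    case F: False
    show ?thesis
    proof (cases "v = x2 + 1")
      case True
      have "q * (if u - x2 \<noteq> 1 then Pd r (x1 - x2) (u - x2) else 0) =
            (1 - q) * (if x1 - x2 \<noteq> 1 then Pd r ((x1 - x2) - 1) ((u - x2) - 1) else 0)"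
        by (rule alg1[OF qr d])
      then show ?thesis using True by (auto simp: algebra_simps)
    next
      case False
      then show ?thesis using F by auto
    qed
  qed
  show "pmf (bind_pmf (lam (1 - b / a) (x1, x2)) (twocar_step b a)) i =
        pmf (bind_pmf (twocar_step a b (x1, x2)) (lam (1 - b / a))) i"
    unfolding i L R E ..
qed


lemma step_inv: "snd s < fst s \<Longrightarrow> y \<in> set_pmf (twocar_step a b s) \<Longrightarrow> snd y < fst y"
  unfolding step_alt by (auto simp: Fm_def Bk_def split: if_splits)

lemma lam_set: "y \<in> set_pmf (lam p s) \<Longrightarrow> snd y = snd s"
  unfolding lam_def by auto

lemma steps_Suc: "twocar_steps a b (Suc n) s = bind_pmf (twocar_steps a b n s) (twocar_step a b)"
  by (simp add: twocar_steps_def)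

lemma steps_0: "twocar_steps a b 0 s = return_pmf s"
  by (simp add: twocar_steps_def)

lemma steps_inv: "snd s < fst s \<Longrightarrow> y \<in> set_pmf (twocar_steps a b n s) \<Longrightarrow> snd y < fst y"
proof (induction n arbitrary: y)
  case 0 then show ?case by (simp add: steps_0)
next
  case (Suc n) then show ?case by (auto simp: steps_Suc intro: step_inv)
qed

lemma trans_inv: "snd s < fst s \<Longrightarrow> y \<in> set_pmf (twocar_trans a b t s) \<Longrightarrow> snd y < fst y"
  unfolding twocar_trans_def by (auto split: if_splits intro: steps_inv)

lemma key_step':
  fixes a b :: real
  assumes ab: "a > b" "b > 0" and x: "snd s < fst s"
  shows "bind_pmf (lam (1 - b / a) s) (twocar_step b a) =
         bind_pmf (twocar_step a b s) (lam (1 - b / a))"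
  using key_step[OF ab, of "snd s" "fst s"] x by simp

lemma key_steps:
  fixes a b :: real
  assumes ab: "a > b" "b > 0" and x: "snd s < fst s"
  shows "bind_pmf (lam (1 - b / a) s) (twocar_steps b a n) =
         bind_pmf (twocar_steps a b n s) (lam (1 - b / a))"
proof (induction n)
  case 0 then show ?case by (simp add: steps_0 bind_return_pmf bind_return_pmf')
next
  case (Suc n)
  have "bind_pmf (lam (1 - b / a) s) (twocar_steps b a (Suc n)) =
        bind_pmf (bind_pmf (lam (1 - b / a) s) (twocar_steps b a n)) (twocar_step b a)"
  proof -
    have "twocar_steps b a (Suc n) = (\<lambda>x. bind_pmf (twocar_steps b a n x) (twocar_step b a))"
      by (rule ext) (rule steps_Suc)
    then show ?thesis by (simp add: bind_assoc_pmf)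
  qed
  also have "\<dots> = bind_pmf (twocar_steps a b n s) (\<lambda>u. bind_pmf (lam (1 - b / a) u) (twocar_step b a))"
    by (simp add: Suc bind_assoc_pmf)
  also have "\<dots> = bind_pmf (twocar_steps a b n s) (\<lambda>u. bind_pmf (twocar_step a b u) (lam (1 - b / a)))"
    by (rule bind_pmf_cong) (auto intro: key_step'[OF ab] steps_inv[OF x])
  also have "\<dots> = bind_pmf (twocar_steps a b (Suc n) s) (lam (1 - b / a))"
    by (simp add: steps_Suc bind_assoc_pmf)
  finally show ?case .
qed

lemma key_trans:
  fixes a b :: real
  assumes ab: "a > b" "b > 0" and x: "snd s < fst s"
  shows "bind_pmf (lam (1 - b / a) s) (twocar_trans b a t) =
         bind_pmf (twocar_trans a b t s) (lam (1 - b / a))"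
proof (cases "t \<le> 0")
  case True
  have "twocar_trans b a t = return_pmf" "twocar_trans a b t s = return_pmf s"
    using True by (auto simp: twocar_trans_def fun_eq_iff)
  then show ?thesis by (simp add: bind_return_pmf bind_return_pmf')
next
  case False
  then have "bind_pmf (lam (1 - b / a) s) (twocar_trans b a t) =
     bind_pmf (poisson_pmf ((a + b) * t)) (\<lambda>n. bind_pmf (lam (1 - b / a) s) (twocar_steps b a n))"
    unfolding twocar_trans_def by (simp add: add.commute bind_commute_pmf[of "lam _ _"])
  also have "\<dots> = bind_pmf (poisson_pmf ((a + b) * t)) (\<lambda>n. bind_pmf (twocar_steps a b n s) (lam (1 - b / a)))"
    by (simp add: key_steps[OF ab x])
  also have "\<dots> = bind_pmf (twocar_trans a b t s) (lam (1 - b / a))"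
    using False unfolding twocar_trans_def by (simp add: bind_assoc_pmf)
  finally show ?thesis .
qed

lemma key_path:
  fixes a b :: real
  assumes ab: "a > b" "b > 0"
  shows "snd s < fst s \<Longrightarrow> map_pmf (map snd) (bind_pmf (lam (1 - b / a) s) (\<lambda>s'. twocar_path b a s' t0 ts)) =
         map_pmf (map snd) (twocar_path a b s t0 ts)"
proof (induction ts arbitrary: s t0)
  case Nil then show ?case by simp
next
  case (Cons t ts)
  let ?l = "lam (1 - b / a)"
  let ?K = "\<lambda>s''. map_pmf (\<lambda>r. snd s'' # map snd r) (twocar_path b a s'' t ts)"
  have "map_pmf (map snd) (bind_pmf (?l s) (\<lambda>s'. twocar_path b a s' t0 (t # ts))) =
        bind_pmf (bind_pmf (?l s) (twocar_trans b a (t - t0))) ?K"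
    by (simp add: bind_assoc_pmf map_bind_pmf map_pmf_comp)
  also have "\<dots> = bind_pmf (twocar_trans a b (t - t0) s) (\<lambda>u. bind_pmf (?l u) ?K)"
    by (simp add: key_trans[OF ab Cons.prems] bind_assoc_pmf)
  also have "\<dots> = bind_pmf (twocar_trans a b (t - t0) s)
      (\<lambda>u. map_pmf (\<lambda>r. snd u # r) (map_pmf (map snd) (bind_pmf (?l u) (\<lambda>s'. twocar_path b a s' t ts))))"
  proof (rule bind_pmf_cong[OF refl])
    fix u assume "u \<in> set_pmf (twocar_trans a b (t - t0) s)"
    have "bind_pmf (?l u) ?K = bind_pmf (?l u) (\<lambda>s''. map_pmf (\<lambda>r. snd u # r) (map_pmf (map snd) (twocar_path b a s'' t ts)))"
      by (rule bind_pmf_cong[OF refl]) (auto dest: lam_set simp: map_pmf_comp)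
    then show "bind_pmf (?l u) ?K = map_pmf (\<lambda>r. snd u # r) (map_pmf (map snd) (bind_pmf (?l u) (\<lambda>s'. twocar_path b a s' t ts)))"
      by (simp add: map_bind_pmf)
  qed
  also have "\<dots> = bind_pmf (twocar_trans a b (t - t0) s)
      (\<lambda>u. map_pmf (\<lambda>r. snd u # r) (map_pmf (map snd) (twocar_path a b u t ts)))"
    by (rule bind_pmf_cong[OF refl]) (simp add: Cons.IH trans_inv[OF Cons.prems])
  also have "\<dots> = map_pmf (map snd) (twocar_path a b s t0 (t # ts))"
    by (simp add: map_bind_pmf map_pmf_comp)
  finally show ?case .
qed

theorem theorem1p2:
  fixes \<alpha>0 \<alpha>1 :: real and x1 x2 :: int
  assumes "\<alpha>0 > \<alpha>1" and "\<alpha>1 > 0" and "x1 > x2"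
  shows "\<forall>ts. sorted ts \<and> (\<forall>t\<in>set ts. 0 \<le> t) \<longrightarrow>
           back_car_fdd \<alpha>0 \<alpha>1 (return_pmf (x1, x2)) ts =
           back_car_fdd \<alpha>1 \<alpha>0
             (map_pmf (\<lambda>G. (x2 + 1 + min (int G) (x1 - x2 - 1), x2))
                      (geometric_pmf (1 - \<alpha>1 / \<alpha>0))) ts"
proof (intro allI impI)
  fix ts :: "real list"
  have init: "map_pmf (\<lambda>G. (x2 + 1 + min (int G) (x1 - x2 - 1), x2)) (geometric_pmf (1 - \<alpha>1 / \<alpha>0))
      = lam (1 - \<alpha>1 / \<alpha>0) (x1, x2)" by (simp add: lam_def)
  show "back_car_fdd \<alpha>0 \<alpha>1 (return_pmf (x1, x2)) ts =
           back_car_fdd \<alpha>1 \<alpha>0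
             (map_pmf (\<lambda>G. (x2 + 1 + min (int G) (x1 - x2 - 1), x2))
                      (geometric_pmf (1 - \<alpha>1 / \<alpha>0))) ts"
    unfolding init back_car_fdd_def twocar_fdd_def bind_return_pmf
    using key_path[OF assms(1,2), of "(x1, x2)" 0 ts] assms(3) by simp
qed

end
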